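(* As $\omega\to0^+$, the fundamental solution $\boldsymbol\Gamma^\omega$ has the asymptotic expansion $$\boldsymbol\Gamma^\omega(\mathbf{x})=\boldsymbol\Gamma(\mathbf{x})+\gamma_\omega\mathbf{I}_2+\omega^2\ln\omega\,\rho\boldsymbol\Gamma_1(\mathbf{x})+\omega^2\rho\ln\sqrt\rho\,\boldsymbol\Gamma_1(\mathbf{x})+\omega^2\rho\boldsymbol\Gamma_2(\mathbf{x})+\mathcal{O}(\omega^4\ln\omega+\omega^4),$$ where $\boldsymbol\Gamma_1(\mathbf{x})=\beta_2|\mathbf{x}|^2\mathbf{I}_2+\beta_3\mathbf{x}\mathbf{x}^T$, $\boldsymbol\Gamma_2(\mathbf{x})=\beta_1|\mathbf{x}|^2\mathbf{I}_2+\beta_2\ln|\mathbf{x}||\mathbf{x}|^2\mathbf{I}_2+\beta_3\ln|\mathbf{x}|\mathbf{x}\mathbf{x}^T+\beta_4\mathbf{x}\mathbf{x}^T$, $\gamma_\omega=\alpha_1\ln(\sqrt\rho\,\omega)+\alpha$ with $\alpha=\frac{\alpha_1}2E_c+\frac{\alpha_2}2-\frac1{8\pi}\big(\frac1\mu\ln\mu+\frac1{2\mu+\lambda}\ln(2\mu+\lambda)\big)$, and $\beta_1=(\frac12E_c-1)\beta_2-\frac18\beta_3+\frac1{2^6\pi}\big(\frac3{\mu^2}\ln\mu+\frac1{(2\mu+\lambda)^2}\ln(2\mu+\lambda)\big)$, $\beta_2=-\frac1{2^5\pi}\big(\frac3{\mu^2}+\frac1{(2\mu+\lambda)^2}\big)$,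 $\beta_3=\frac1{2^4\pi}\big(\frac1{\mu^2}-\frac1{(2\mu+\lambda)^2}\big)$, $\beta_4=\frac14(2E_c-3)\beta_3-\frac1{2^5\pi}\big(\frac1{\mu^2}\ln\mu-\frac1{(2\mu+\lambda)^2}\ln(2\mu+\lambda)\big)$.
   Context: Lamé constants $\lambda,\mu$, density $\rho>0$; $c_s=\sqrt{\mu/\rho}$, $c_p=\sqrt{(\lambda+2\mu)/\rho}$, $k_s=\omega/c_s$, $k_p=\omega/c_p$. The fundamental solution of $\mu\Delta+(\lambda+\mu)\nabla\nabla\cdot+\omega^2\rho$ in $\mathbb{R}^2$ is $\boldsymbol\Gamma^\omega(\mathbf{x})=-\frac{\mathrm{i}}{4\mu}H_0^{(1)}(k_s|\mathbf{x}|)\mathbf{I}_2+\frac{\mathrm{i}}{4\omega^2\rho}\nabla\nabla\big(H_0^{(1)}(k_p|\mathbf{x}|)-H_0^{(1)}(k_s|\mathbf{x}|)\big)$. $\boldsymbol\Gamma(\mathbf{x})=\alpha_1\ln|\mathbf{x}|\mathbf{I}_2-\alpha_2\frac{\mathbf{x}\mathbf{x}^T}{|\mathbf{x}|^2}$, $\alpha_1=\frac1{4\pi}(\frac1\mu+\frac1{2\mu+\lambda})$, $\alpha_2=\frac1{4\pi}(\frac1\mu-\frac1{2\mu+\lambda})$. $E_c=2\gamma-\mathrm{i}\pi-2\ln2$, $\gamma$ Euler's constant. *)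

theory Defs
  imports "HOL-Analysis.Analysis" "HOL-Library.Landau_Symbols"
begin

text \<open>Bessel functions of order zero for a positive real argument (DLMF 10.2.2, 10.8.2),
  and the Hankel function of the first kind of order zero.\<close>

definition besselJ0 :: "real \<Rightarrow> real" where
  "besselJ0 z = (\<Sum>k. (-1)^k * (z/2)^(2*k) / (fact k)^2)"

definition besselY0 :: "real \<Rightarrow> real" where
  "besselY0 z = 2/pi * (ln (z/2) + euler_mascheroni) * besselJ0 z
     + 2/pi * (\<Sum>k. (-1)^(k+2) * harm (k+1) * (z/2)^(2*(k+1)) / (fact (k+1))^2)"

definition hankel10 :: "real \<Rightarrow> complex" where
  "hankel10 z = Complex (besselJ0 z) (besselY0 z)"

definition hessian2 :: "(real^2 \<Rightarrow> complex) \<Rightarrow> real^2 \<Rightarrow> complex^2^2" where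
  "hessian2 g x = (\<chi> i j. vector_derivative
      (\<lambda>t. vector_derivative (\<lambda>s. g (x + t *\<^sub>R axis i 1 + s *\<^sub>R axis j 1)) (at 0)) (at 0))"

definition cscale :: "complex \<Rightarrow> complex^2^2 \<Rightarrow> complex^2^2" where
  "cscale c A = (\<chi> i j. c * A$i$j)"

definition Imat :: "complex^2^2" where
  "Imat = mat 1"

definition outer :: "real^2 \<Rightarrow> complex^2^2" where
  "outer x = (\<chi> i j. complex_of_real (x$i * x$j))"

text \<open>Physical parameters: Lame constants lam, mu, density rho, frequency omega.\<close>

definition k_s :: "real \<Rightarrow> real \<Rightarrow> real \<Rightarrow> real \<Rightarrow> real" where
  "k_s lam mu rho \<omega> = \<omega> / sqrt (mu / rho)"

definition k_p :: "real \<Rightarrow> real \<Rightarrow> real \<Rightarrow> real \<Rightarrow> real" where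
  "k_p lam mu rho \<omega> = \<omega> / sqrt ((lam + 2*mu) / rho)"

definition Gamma_omega :: "real \<Rightarrow> real \<Rightarrow> real \<Rightarrow> real \<Rightarrow> real^2 \<Rightarrow> complex^2^2" where
  "Gamma_omega lam mu rho \<omega> x =
     cscale (- \<i> / (4 * mu) * hankel10 (k_s lam mu rho \<omega> * norm x)) Imat
   + cscale (\<i> / (4 * \<omega>^2 * rho))
       (hessian2 (\<lambda>y. hankel10 (k_p lam mu rho \<omega> * norm y) - hankel10 (k_s lam mu rho \<omega> * norm y)) x)"

definition alpha1 :: "real \<Rightarrow> real \<Rightarrow> real" where
  "alpha1 lam mu = 1/(4*pi) * (1/mu + 1/(2*mu + lam))"

definition alpha2 :: "real \<Rightarrow> real \<Rightarrow> real" where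
  "alpha2 lam mu = 1/(4*pi) * (1/mu - 1/(2*mu + lam))"

definition Gamma0 :: "real \<Rightarrow> real \<Rightarrow> real^2 \<Rightarrow> complex^2^2" where
  "Gamma0 lam mu x = cscale (alpha1 lam mu * ln (norm x)) Imat
     - cscale (alpha2 lam mu / (norm x)^2) (outer x)"

definition Ec :: complex where
  "Ec = 2 * euler_mascheroni - \<i> * pi - 2 * ln 2"

definition alpha_c :: "real \<Rightarrow> real \<Rightarrow> complex" where
  "alpha_c lam mu = alpha1 lam mu / 2 * Ec + alpha2 lam mu / 2
     - 1/(8*pi) * (1/mu * ln mu + 1/(2*mu + lam) * ln (2*mu + lam))"

definition gamma_omega :: "real \<Rightarrow> real \<Rightarrow> real \<Rightarrow> real \<Rightarrow> complex" where
  "gamma_omega lam mu rho \<omega> = alpha1 lam mu * ln (sqrt rho * \<omega>) + alpha_c lam mu"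

definition beta2 :: "real \<Rightarrow> real \<Rightarrow> real" where
  "beta2 lam mu = - 1/(2^5*pi) * (3/mu^2 + 1/(2*mu + lam)^2)"

definition beta3 :: "real \<Rightarrow> real \<Rightarrow> real" where
  "beta3 lam mu = 1/(2^4*pi) * (1/mu^2 - 1/(2*mu + lam)^2)"

definition beta1 :: "real \<Rightarrow> real \<Rightarrow> complex" where
  "beta1 lam mu = (1/2 * Ec - 1) * beta2 lam mu - 1/8 * beta3 lam mu
     + 1/(2^6*pi) * (3/mu^2 * ln mu + 1/(2*mu + lam)^2 * ln (2*mu + lam))"

definition beta4 :: "real \<Rightarrow> real \<Rightarrow> complex" where
  "beta4 lam mu = 1/4 * (2 * Ec - 3) * beta3 lam mu
     - 1/(2^5*pi) * (1/mu^2 * ln mu - 1/(2*mu + lam)^2 * ln (2*mu + lam))"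

definition Gamma1 :: "real \<Rightarrow> real \<Rightarrow> real^2 \<Rightarrow> complex^2^2" where
  "Gamma1 lam mu x = cscale (beta2 lam mu * (norm x)^2) Imat + cscale (beta3 lam mu) (outer x)"

definition Gamma2 :: "real \<Rightarrow> real \<Rightarrow> real^2 \<Rightarrow> complex^2^2" where
  "Gamma2 lam mu x = cscale (beta1 lam mu * (norm x)^2) Imat
     + cscale (beta2 lam mu * ln (norm x) * (norm x)^2) Imat
     + cscale (beta3 lam mu * ln (norm x)) (outer x)
     + cscale (beta4 lam mu) (outer x)"

end

theory Submission
  imports Defs "HOL-Real_Asymp.Real_Asymp"
begin

lemma inner_e: "(x + t *\<^sub>R axis i 1) \<bullet> axis j (1::real) = x$j + t * (if i = j then 1 else 0)"
  for x :: "real^'n"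
  by (cases "i = j") (auto simp: inner_add_left inner_axis inner_axis_axis, simp add: axis_def)

lemma norm_axis1: "norm (axis i (1::real)) = 1"
  by simp

lemma hessian2_radial:
  fixes F F1 F2 :: "real \<Rightarrow> complex" and g :: "real^2 \<Rightarrow> complex" and x :: "real^2"
  assumes g: "\<And>y. y \<noteq> 0 \<Longrightarrow> g y = F (y \<bullet> y)"
    and d1: "\<And>q. q > 0 \<Longrightarrow> (F has_vector_derivative F1 q) (at q)"
    and d2: "\<And>q. q > 0 \<Longrightarrow> (F1 has_vector_derivative F2 q) (at q)"
    and x: "x \<noteq> 0"
  shows "hessian2 g x $ i $ j = of_real (4 * x$i * x$j) * F2 (x \<bullet> x)
           + of_real (2 * (if i = j then 1 else 0)) * F1 (x \<bullet> x)"
proof -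
  define ei where "ei = axis i (1::real)"
  define ej where "ej = axis j (1::real)"
  define dl :: real where "dl = (if i = j then 1 else 0)"
  have inner_dec: "(y + s *\<^sub>R ej) \<bullet> (y + s *\<^sub>R ej) = y \<bullet> y + 2 * s * (y \<bullet> ej) + s^2" for y :: "real^2" and s
    unfolding ej_def by (simp add: inner_add_left inner_add_right inner_axis inner_axis_axis power2_eq_square algebra_simps inner_commute)
  have inner_dec2: "(x + t *\<^sub>R ei) \<bullet> (x + t *\<^sub>R ei) = x \<bullet> x + 2 * t * (x $ i) + t^2" for t
    unfolding ei_def by (simp add: inner_add_left inner_add_right inner_axis inner_axis_axis power2_eq_square algebra_simps inner_commute)
  have inner_dec3: "(x + t *\<^sub>R ei) \<bullet> ej = x $ j + t * dl" for t
    unfolding ei_def ej_def dl_def by (rule inner_e)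
  have inner_vd: "((\<lambda>s. g (y + s *\<^sub>R ej)) has_vector_derivative ((2 * (y \<bullet> ej)) *\<^sub>R F1 (y \<bullet> y))) (at 0)"
    if y: "y \<noteq> 0" for y :: "real^2"
  proof -
    define \<phi> where "\<phi> s = y \<bullet> y + 2 * s * (y \<bullet> ej) + s^2" for s
    have "(\<phi> has_vector_derivative (2 * (y \<bullet> ej))) (at 0)"
      unfolding \<phi>_def has_real_derivative_iff_has_vector_derivative[symmetric]
      by (auto intro!: derivative_eq_intros)
    moreover have "\<phi> 0 = y \<bullet> y" by (simp add: \<phi>_def)
    moreover have "y \<bullet> y > 0" using y by simp
    ultimately have "((F \<circ> \<phi>) has_vector_derivative ((2 * (y \<bullet> ej)) *\<^sub>R F1 (y \<bullet> y))) (at 0)"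
      using d1 by (metis vector_diff_chain_at)
    then show ?thesis
    proof (rule has_vector_derivative_transform_within_open[where S = "ball 0 (norm y)"])
      fix s :: real assume "s \<in> ball 0 (norm y)"
      then have "norm (s *\<^sub>R ej) < norm y" by (simp add: ej_def)
      then have "y + s *\<^sub>R ej \<noteq> 0"
        by (metis add.commute add_eq_0_iff2 norm_minus_cancel order_less_irrefl)
      then show "(F \<circ> \<phi>) s = g (y + s *\<^sub>R ej)"
        using g inner_dec by (simp add: \<phi>_def)
    qed (use y in auto)
  qed
  define D where "D t = (2 * (x $ j + t * dl)) *\<^sub>R F1 (x \<bullet> x + 2 * t * (x $ i) + t^2)" for t
  have eqD: "vector_derivative (\<lambda>s. g (x + t *\<^sub>R ei + s *\<^sub>R ej)) (at 0) = D t"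
    if "t \<in> ball 0 (norm x)" for t
  proof -
    from that have "norm (t *\<^sub>R ei) < norm x" by (simp add: ei_def)
    then have "x + t *\<^sub>R ei \<noteq> 0"
      by (metis add.commute add_eq_0_iff2 norm_minus_cancel order_less_irrefl)
    from inner_vd[OF this] show ?thesis
      unfolding D_def inner_dec2 inner_dec3 by (simp add: vector_derivative_at)
  qed
  define \<psi> where "\<psi> t = x \<bullet> x + 2 * t * (x $ i) + t^2" for t
  have "(\<psi> has_vector_derivative (2 * x $ i)) (at 0)"
    unfolding \<psi>_def has_real_derivative_iff_has_vector_derivative[symmetric]
    by (auto intro!: derivative_eq_intros)
  moreover have "\<psi> 0 = x \<bullet> x" by (simp add: \<psi>_def)
  moreover have "x \<bullet> x > 0" using x by simp
  ultimately have c: "((F1 \<circ> \<psi>) has_vector_derivative ((2 * x $ i) *\<^sub>R F2 (x \<bullet> x))) (at 0)"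
    using d2 by (metis vector_diff_chain_at)
  have "((\<lambda>t. 2 * (x $ j + t * dl)) has_field_derivative 2 * dl) (at 0)"
    by (auto intro!: derivative_eq_intros)
  from has_vector_derivative_scaleR[OF this c]
  have "(D has_vector_derivative ((2 * (x $ j)) *\<^sub>R ((2 * x $ i) *\<^sub>R F2 (x \<bullet> x)) + (2 * dl) *\<^sub>R F1 (x \<bullet> x))) (at 0)"
    by (simp add: D_def[abs_def] \<psi>_def o_def)
  then have "((\<lambda>t. vector_derivative (\<lambda>s. g (x + t *\<^sub>R ei + s *\<^sub>R ej)) (at 0)) has_vector_derivative
      ((2 * (x $ j)) *\<^sub>R ((2 * x $ i) *\<^sub>R F2 (x \<bullet> x)) + (2 * dl) *\<^sub>R F1 (x \<bullet> x))) (at 0)"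
    by (rule has_vector_derivative_transform_within_open[where S = "ball 0 (norm x)"])
       (use x eqD in auto)
  then show ?thesis
    unfolding hessian2_def
    by (simp add: vector_derivative_at ei_def ej_def dl_def scaleR_conv_of_real algebra_simps)
qed

definition PS :: "(nat \<Rightarrow> real) \<Rightarrow> real \<Rightarrow> real" where
  "PS c u = (\<Sum>n. c n * u^n)"

definition entire :: "(nat \<Rightarrow> real) \<Rightarrow> bool" where
  "entire c \<longleftrightarrow> (\<forall>u. summable (\<lambda>n. c n * u^n))"

definition cP :: "nat \<Rightarrow> real" where
  "cP n = (-1)^n / (4^n * (fact n)^2)"

definition cQ :: "nat \<Rightarrow> real" where
  "cQ n = (if n = 0 then 0 else (-1)^(n+1) * harm n / (4^n * (fact n)^2))"

lemma entire_diffs: "entire c \<Longrightarrow> entire (diffs c)"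
  unfolding entire_def by (blast intro: termdiff_converges_all)

lemma DERIV_PS: "entire c \<Longrightarrow> (PS c has_real_derivative PS (diffs c) u) (at u)"
  unfolding entire_def PS_def by (rule termdiffs_strong_converges_everywhere) blast

lemma DERIV_PS_chain [derivative_intros]:
  assumes "entire c" "(f has_real_derivative f') (at x)"
  shows "((\<lambda>x. PS c (f x)) has_real_derivative (PS (diffs c) (f x) * f')) (at x)"
  using DERIV_chain2[OF DERIV_PS[OF assms(1)] assms(2)] .

lemma PS_tail:
  assumes "entire c"
  shows "\<exists>M. \<forall>u. \<bar>u\<bar> \<le> 1 \<longrightarrow> \<bar>PS c u - (\<Sum>n<N. c n * u^n)\<bar> \<le> M * \<bar>u\<bar>^N"
proof -
  have s2: "summable (\<lambda>n. c n * 2^n)" using assms by (simp add: entire_def)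
  have sa: "summable (\<lambda>n. norm (c n * 1^n))"
    by (rule powser_insidea[OF s2]) simp
  then have sa': "summable (\<lambda>n. \<bar>c n\<bar>)" by simp
  define M where "M = (\<Sum>n. \<bar>c (n + N)\<bar>)"
  have "\<bar>PS c u - (\<Sum>n<N. c n * u^n)\<bar> \<le> M * \<bar>u\<bar>^N" if u: "\<bar>u\<bar> \<le> 1" for u
  proof -
    have su: "summable (\<lambda>n. c n * u^n)" using assms by (simp add: entire_def)
    have "PS c u - (\<Sum>n<N. c n * u^n) = (\<Sum>n. c (n + N) * u^(n + N))"
      unfolding PS_def using suminf_split_initial_segment[OF su, of N] by simp
    also have "\<dots> = (\<Sum>n. u^N * (c (n + N) * u^n))"
      by (simp add: power_add mult_ac)
    also have "\<dots> = u^N * (\<Sum>n. c (n + N) * u^n)"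
    proof (rule suminf_mult)
      show "summable (\<lambda>n. c (n + N) * u ^ n)"
      proof -
        have "summable (\<lambda>n. c (n + N) * u^(n+N))"
          using summable_ignore_initial_segment[OF su, of N] by simp
        then have "summable (\<lambda>n. (c (n + N) * u^(n+N)) * (if u = 0 then 0 else 1 / u^N))"
          by (rule summable_mult2)
        moreover have "summable (\<lambda>n. c (n + N) * u ^ n)" if "u = 0"
        proof -
          have "summable (\<lambda>n. if n = 0 then c N else 0)" by simp
          moreover have "(\<lambda>n. c (n + N) * u ^ n) = (\<lambda>n. if n = 0 then c N else 0)"
            using that by (auto simp: fun_eq_iff)
          ultimately show ?thesis by simp
        qed
        ultimately show ?thesis
          by (cases "u = 0") (auto simp: power_add field_simps)
      qed
    qed
    finally have eq: "PS c u - (\<Sum>n<N. c n * u^n) = u^N * (\<Sum>n. c (n + N) * u^n)" .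
    have sN: "summable (\<lambda>n. \<bar>c (n + N)\<bar>)"
      using summable_ignore_initial_segment[OF sa', of N] by simp
    have "\<bar>\<Sum>n. c (n + N) * u^n\<bar> \<le> (\<Sum>n. \<bar>c (n + N) * u^n\<bar>)"
    proof (rule summable_rabs)
      show "summable (\<lambda>n. \<bar>c (n + N) * u ^ n\<bar>)"
        by (rule summable_comparison_test'[OF sN, of 0])
           (use u in \<open>auto simp: abs_mult power_abs intro!: mult_left_le power_le_one\<close>)
    qed
    also have "\<dots> \<le> M"
      unfolding M_def
    proof (rule suminf_le)
      show "summable (\<lambda>n. \<bar>c (n + N) * u ^ n\<bar>)"
        by (rule summable_comparison_test'[OF sN, of 0])
           (use u in \<open>auto simp: abs_mult power_abs intro!: mult_left_le power_le_one\<close>)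
    qed (use sN u in \<open>auto simp: abs_mult power_abs intro!: mult_left_le power_le_one\<close>)
    finally have "\<bar>\<Sum>n. c (n + N) * u^n\<bar> \<le> M" .
    then have "\<bar>u\<bar>^N * \<bar>\<Sum>n. c (n + N) * u^n\<bar> \<le> \<bar>u\<bar>^N * M"
      by (rule mult_left_mono) simp
    then show ?thesis unfolding eq abs_mult power_abs
      by (simp add: mult.commute)
  qed
  then show ?thesis by blast
qed

lemma entire_cP: "entire cP"
  unfolding entire_def
proof
  fix u :: real
  show "summable (\<lambda>n. cP n * u^n)"
  proof (rule summable_comparison_test'[OF summable_exp[of "\<bar>u\<bar>"], of 0])
    fix n :: nat
    have f: "fact n \<ge> (1::real)" by simp
    have "4^n * (fact n)^2 \<ge> (fact n :: real)"
    proof -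
      have "(fact n :: real) = 1 * 1 * fact n" by simp
      also have "\<dots> \<le> 4^n * fact n * fact n"
        using f by (intro mult_mono) auto
      finally show ?thesis by (simp add: power2_eq_square mult_ac)
    qed
    then have "1 / (4^n * (fact n)^2) \<le> inverse (fact n :: real)"
      using f by (simp add: divide_simps)
    from mult_right_mono[OF this, of "\<bar>u\<bar>^n"]
    show "norm (cP n * u^n) \<le> inverse (fact n) * \<bar>u\<bar>^n"
      unfolding cP_def by (simp add: abs_mult power_abs abs_divide)
  qed
qed

lemma harm_le_n: "harm n \<le> (real n)"
proof (induction n)
  case 0 then show ?case by (simp add: harm_def)
next
  case (Suc n)
  have "inverse (real (Suc n)) \<le> 1" by (simp add: inverse_le_1_iff)
  then show ?case using Suc by (simp add: harm_Suc)
qed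

lemma half_pow: "(z/2::real)^(2*k) = (z^2)^k / 4^k"
  by (simp add: power_mult power_divide)

lemma entire_cQ: "entire cQ"
  unfolding entire_def
proof
  fix u :: real
  show "summable (\<lambda>n. cQ n * u^n)"
  proof (rule summable_comparison_test'[OF summable_exp[of "\<bar>u\<bar>"], of 0])
    fix n :: nat
    have f: "fact n \<ge> (1::real)" by simp
    have h0: "harm n \<ge> (0::real)" by (rule harm_nonneg)
    have "harm n * fact n \<le> (4^n * (fact n)^2 :: real)"
    proof -
      have "harm n \<le> (fact n :: real)"
        using harm_le_n[of n] fact_ge_self[of n] by (metis of_nat_fact of_nat_le_iff order_trans)
      also have "\<dots> \<le> 4^n * fact n" using f by simp
      finally show ?thesis using f by (simp add: power2_eq_square mult_ac mult_right_mono)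
    qed
    then have "harm n / (4^n * (fact n)^2) \<le> inverse (fact n :: real)"
      using f by (simp add: divide_simps)
    from mult_right_mono[OF this, of "\<bar>u\<bar>^n"]
    show "norm (cQ n * u^n) \<le> inverse (fact n) * \<bar>u\<bar>^n"
      unfolding cQ_def using h0 by (auto simp: abs_mult power_abs abs_divide)
  qed
qed

lemma besselJ0_PS: "besselJ0 z = PS cP (z^2)"
  unfolding besselJ0_def PS_def cP_def
  by (rule arg_cong[where f = suminf]) (auto simp: fun_eq_iff half_pow)

lemma besselY0_PS: "besselY0 z = 2/pi * (ln (z/2) + euler_mascheroni) * PS cP (z^2) + 2/pi * PS cQ (z^2)"
proof -
  have s: "summable (\<lambda>n. cQ n * (z^2)^n)" using entire_cQ by (simp add: entire_def)
  have "PS cQ (z^2) = (\<Sum>n. cQ (Suc n) * (z^2)^(Suc n))"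
    unfolding PS_def using suminf_split_head[OF s] by (simp add: cQ_def)
  also have "\<dots> = (\<Sum>k. (-1)^(k+2) * harm (k+1) * (z/2)^(2*(k+1)) / (fact (k+1))^2)"
    by (rule arg_cong[where f = suminf]) (simp only: half_pow, auto simp: fun_eq_iff cQ_def)
  finally show ?thesis unfolding besselY0_def besselJ0_PS by simp
qed

definition gO :: "real \<Rightarrow> real" where "gO w = w^4 * ln w + w^4"

lemma term_bigo:
  fixes e h :: "real \<Rightarrow> real"
  assumes "e \<in> O[at_right 0](\<lambda>w. w^n)" and "(\<lambda>w. h w * w^n) \<in> O[at_right 0](gO)"
  shows "(\<lambda>w. C * h w * e w) \<in> O[at_right 0](gO)"
proof -
  have "(\<lambda>w. h w * e w) \<in> O[at_right 0](\<lambda>w. h w * w^n)"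
    using assms(1) by (rule landau_o.big.mult_left)
  then have h: "(\<lambda>w. h w * e w) \<in> O[at_right 0](gO)"
    using assms(2) by (rule landau_o.big_trans)
  show ?thesis
  proof (cases "C = 0")
    case True then show ?thesis by simp
  next
    case False
    then show ?thesis using h by (simp add: mult.assoc)
  qed
qed

lemma asy1: "(\<lambda>w. 1 * w^4) \<in> O[at_right 0](gO)" unfolding gO_def by real_asymp
lemma asyL: "(\<lambda>w. ln w * w^4) \<in> O[at_right 0](gO)" unfolding gO_def by real_asymp
lemma asy2: "(\<lambda>w. w^2 * w^2) \<in> O[at_right 0](gO)" unfolding gO_def by real_asymp
lemma asy2L: "(\<lambda>w. w^2 * ln w * w^2) \<in> O[at_right 0](gO)" unfolding gO_def by real_asymp
lemma asym2: "(\<lambda>w. 1 / w^2 * w^6) \<in> O[at_right 0](gO)" unfolding gO_def by real_asymp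

definition tail :: "(nat \<Rightarrow> real) \<Rightarrow> nat \<Rightarrow> real \<Rightarrow> real" where
  "tail c N u = PS c u - (\<Sum>n<N. c n * u^n)"

lemma tail_bigo:
  assumes "entire c"
  shows "(\<lambda>w. tail c N (k * w^2)) \<in> O[at_right 0](\<lambda>w. w^(2*N))"
proof -
  obtain M where M: "\<And>u. \<bar>u\<bar> \<le> 1 \<Longrightarrow> \<bar>PS c u - (\<Sum>n<N. c n * u^n)\<bar> \<le> M * \<bar>u\<bar>^N"
    using PS_tail[OF assms, of N] by blast
  have "((\<lambda>w. k * w^2) \<longlongrightarrow> 0) (at_right 0)"
    by real_asymp
  then have ev: "eventually (\<lambda>w. \<bar>k * w^2\<bar> < 1) (at_right (0::real))"
    by (rule order_tendstoD(2)[of "\<lambda>w. \<bar>k * w^2\<bar>", OF tendsto_rabs_zero, simplified]) simp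
  show ?thesis
  proof (rule bigoI[where c = "M * \<bar>k\<bar>^N"])
    show "\<forall>\<^sub>F w in at_right 0. norm (tail c N (k * w^2)) \<le> M * \<bar>k\<bar>^N * norm (w^(2*N))"
      using ev
    proof eventually_elim
      case (elim w)
      then have "\<bar>tail c N (k * w^2)\<bar> \<le> M * \<bar>k * w^2\<bar>^N"
        unfolding tail_def by (intro M) simp
      also have "\<dots> = M * \<bar>k\<bar>^N * \<bar>w^(2*N)\<bar>"
        by (simp add: abs_mult power_mult_distrib power_mult power_abs)
      finally show ?case by simp
    qed
  qed
qed

lemma tail_bigo':
  assumes "entire c" "m = 2*N"
  shows "(\<lambda>w. tail c N (k * w^2)) \<in> O[at_right 0](\<lambda>w. w^m)"
  using tail_bigo[OF assms(1)] assms(2) by simp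

lemma DERIV_PS_eq:
  assumes "entire c" "(f has_real_derivative f') (at x)" "D = PS (diffs c) (f x) * f'"
  shows "((\<lambda>x. PS c (f x)) has_real_derivative D) (at x)"
  using DERIV_PS_chain[OF assms(1,2)] assms(3) by simp

lemma entires: "entire cP" "entire cQ" "entire (diffs cP)" "entire (diffs cQ)"
  "entire (diffs (diffs cP))" "entire (diffs (diffs cQ))"
  by (simp_all add: entire_cP entire_cQ entire_diffs)

definition ellf :: "real \<Rightarrow> real \<Rightarrow> real" where
  "ellf k q = ln k + ln q / 2 - ln 2 + euler_mascheroni"

definition Af where "Af k q = PS cP (k^2*q)"
definition A1f where "A1f k q = k^2 * PS (diffs cP) (k^2*q)"
definition A2f where "A2f k q = k^4 * PS (diffs (diffs cP)) (k^2*q)"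
definition Yf where "Yf k q = 2/pi*(ellf k q * PS cP (k^2*q) + PS cQ (k^2*q))"
definition Y1f where "Y1f k q = 2/pi*(PS cP (k^2*q)/(2*q) + ellf k q * k^2 * PS (diffs cP) (k^2*q)
   + k^2 * PS (diffs cQ) (k^2*q))"
definition Y2f where "Y2f k q = 2/pi*(-PS cP (k^2*q)/(2*q^2) + k^2*PS (diffs cP) (k^2*q)/q
   + ellf k q * k^4 * PS (diffs (diffs cP)) (k^2*q) + k^4 * PS (diffs (diffs cQ)) (k^2*q))"

lemma DA: "(Af k has_real_derivative A1f k q) (at q)"
  unfolding Af_def[abs_def] A1f_def
  by (auto intro!: derivative_eq_intros simp: entires)
lemma DA1: "(A1f k has_real_derivative A2f k q) (at q)"
  unfolding A1f_def[abs_def] A2f_def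
  by (auto intro!: derivative_eq_intros simp: entires)
lemma DY: "q > 0 \<Longrightarrow> (Yf k has_real_derivative Y1f k q) (at q)"
  unfolding Yf_def[abs_def] Y1f_def ellf_def
  by (auto intro!: derivative_eq_intros simp: entires)
lemma DY1: "q > 0 \<Longrightarrow> (Y1f k has_real_derivative Y2f k q) (at q)"
  unfolding Y1f_def[abs_def] Y2f_def ellf_def
  by (auto intro!: derivative_eq_intros simp: entires) (simp add: field_simps power4_eq_xxxx power2_eq_square)

lemma hankel_rad:
  assumes k: "k > 0" and y: "y \<noteq> 0"
  shows "hankel10 (k * norm y) = of_real (Af k (y \<bullet> y)) + \<i> * of_real (Yf k (y \<bullet> y))"
proof -
  have n: "norm y > 0" using y by simp
  have sq: "(k * norm y)^2 = k^2 * (y \<bullet> y)"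
    by (simp add: power_mult_distrib power2_norm_eq_inner)
  have "ln (k * norm y / 2) = ln k + ln (y \<bullet> y) / 2 - ln 2"
  proof -
    have "ln (k * norm y / 2) = ln k + ln (norm y) - ln 2"
      using k n by (simp add: ln_div ln_mult)
    moreover have "ln (norm y) = ln (y \<bullet> y) / 2"
      using n by (simp add: norm_eq_sqrt_inner ln_sqrt)
    ultimately show ?thesis by simp
  qed
  note lneq = this
  have "besselY0 (k * norm y) = Yf k (y \<bullet> y)"
    unfolding besselY0_PS sq Yf_def ellf_def lneq by (simp add: algebra_simps)
  moreover have "besselJ0 (k * norm y) = Af k (y \<bullet> y)"
    unfolding besselJ0_PS sq Af_def by simp
  ultimately show ?thesis
    unfolding hankel10_def Complex_eq by simp
qed

lemma hess_g:
  fixes x :: "real^2"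
  assumes kp: "kp > 0" and ks: "ks > 0" and x: "x \<noteq> 0"
  shows "hessian2 (\<lambda>y. hankel10 (kp * norm y) - hankel10 (ks * norm y)) x $ i $ j
     = of_real (4 * x$i * x$j) * (of_real (A2f kp (x\<bullet>x) - A2f ks (x\<bullet>x)) + \<i> * of_real (Y2f kp (x\<bullet>x) - Y2f ks (x\<bullet>x)))
     + of_real (2 * (if i = j then 1 else 0)) * (of_real (A1f kp (x\<bullet>x) - A1f ks (x\<bullet>x)) + \<i> * of_real (Y1f kp (x\<bullet>x) - Y1f ks (x\<bullet>x)))"
proof (rule hessian2_radial[where F = "\<lambda>q. of_real (Af kp q - Af ks q) + \<i> * of_real (Yf kp q - Yf ks q)"])
  fix y :: "real^2" assume "y \<noteq> 0"
  then show "hankel10 (kp * norm y) - hankel10 (ks * norm y) = of_real (Af kp (y \<bullet> y) - Af ks (y \<bullet> y)) + \<i> * of_real (Yf kp (y \<bullet> y) - Yf ks (y \<bullet> y))"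
    by (simp add: hankel_rad[OF kp \<open>y \<noteq> 0\<close>] hankel_rad[OF ks \<open>y \<noteq> 0\<close>] algebra_simps)
next
  fix q :: real assume q: "q > 0"
  show "((\<lambda>q. of_real (Af kp q - Af ks q) + \<i> * of_real (Yf kp q - Yf ks q)) has_vector_derivative
      (of_real (A1f kp q - A1f ks q) + \<i> * of_real (Y1f kp q - Y1f ks q))) (at q)"
    by (intro has_vector_derivative_add has_vector_derivative_mult_right has_vector_derivative_of_real
        DERIV_diff DA DY q)
  show "((\<lambda>q. of_real (A1f kp q - A1f ks q) + \<i> * of_real (Y1f kp q - Y1f ks q)) has_vector_derivative
      (of_real (A2f kp q - A2f ks q) + \<i> * of_real (Y2f kp q - Y2f ks q))) (at q)"
    by (intro has_vector_derivative_add has_vector_derivative_mult_right has_vector_derivative_of_real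
        DERIV_diff DA1 DY1 q)
qed (rule x)

definition RGf :: "real \<Rightarrow> real \<Rightarrow> real \<Rightarrow> real \<Rightarrow> real \<Rightarrow> real \<Rightarrow> real \<Rightarrow> real \<Rightarrow> real \<Rightarrow> real \<Rightarrow> real
  \<Rightarrow> real \<Rightarrow> real \<Rightarrow> real \<Rightarrow> real \<Rightarrow> real \<Rightarrow> real \<Rightarrow> real \<Rightarrow> real \<Rightarrow> real \<Rightarrow> real \<Rightarrow> real \<Rightarrow> real" where
  "RGf K mu pp q X dl ks2 kp2 ls lp PsA Qs Ps Pp dPs dPp dQs dQp ddPs ddPp ddQs ddQp =
     dl/(4*mu) * (2/pp*(ls*PsA + Qs))
     - (4*X*(2/pp*(-Pp/(2*q^2) + kp2*dPp/q + lp*kp2^2*ddPp + kp2^2*ddQp)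
             - 2/pp*(-Ps/(2*q^2) + ks2*dPs/q + ls*ks2^2*ddPs + ks2^2*ddQs))
        + 2*dl*(2/pp*(Pp/(2*q) + lp*kp2*dPp + kp2*dQp) - 2/pp*(Ps/(2*q) + ls*ks2*dPs + ks2*dQs)))/(4*K)"

lemma RGf_add:
  "RGf K mu pp q X dl ks2 kp2 ls lp (PsA+PsA') (Qs+Qs') (Ps+Ps') (Pp+Pp') (dPs+dPs') (dPp+dPp') (dQs+dQs') (dQp+dQp') (ddPs+ddPs') (ddPp+ddPp') (ddQs+ddQs') (ddQp+ddQp')
   = RGf K mu pp q X dl ks2 kp2 ls lp PsA Qs Ps Pp dPs dPp dQs dQp ddPs ddPp ddQs ddQp
   + RGf K mu pp q X dl ks2 kp2 ls lp PsA' Qs' Ps' Pp' dPs' dPp' dQs' dQp' ddPs' ddPp' ddQs' ddQp'"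
  unfolding RGf_def by (simp add: algebra_simps add_divide_distrib diff_divide_distrib)

lemma Y2poly: "q > 0 \<Longrightarrow> pp > 0 \<Longrightarrow> 2/pp*(-(1 - k2*q/4 + (k2*q)^2/64)/(2*q^2) + k2*(-1/4 + k2*q/32)/q + l*k2^2*(1/32) + k2^2*(-3/64))
   = (-1/(q^2) - k2/(4*q) - 3*k2^2/64 + l*k2^2/16)/pp" for q pp k2 l :: real
  by (simp add: field_simps power2_eq_square)

lemma Y1poly: "q > 0 \<Longrightarrow> pp > 0 \<Longrightarrow> 2/pp*((1 - k2*q/4 + (k2*q)^2/64)/(2*q) + l*k2*(-1/4 + k2*q/32) + k2*(1/4 - 3*(k2*q)/64))
   = (1/q + k2/4 - 5*k2^2*q/64 + l*(-k2/2 + k2^2*q/16))/pp" for q pp k2 l :: real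
  by (simp add: field_simps power2_eq_square)

lemma alg_Re_main:
  fixes K mu nu pp q X dl Lam lm lnu :: real
  assumes pos: "K > 0" "mu > 0" "nu > 0" "pp > 0" "q > 0"
  shows "dl/(4*mu) * (2/pp*((Lam - lm/2)*(1 - K/mu*q/4) + K/mu*q/4))
          - (4*X*((-1/(q^2) - (K/nu)/(4*q) - 3*(K/nu)^2/64 + (Lam - lnu/2)*(K/nu)^2/16)/pp
                  - (-1/(q^2) - (K/mu)/(4*q) - 3*(K/mu)^2/64 + (Lam - lm/2)*(K/mu)^2/16)/pp)
             + 2*dl*((1/q + (K/nu)/4 - 5*(K/nu)^2*q/64 + (Lam - lnu/2)*(-(K/nu)/2 + (K/nu)^2*q/16))/pp
                  - (1/q + (K/mu)/4 - 5*(K/mu)^2*q/64 + (Lam - lm/2)*(-(K/mu)/2 + (K/mu)^2*q/16))/pp))/(4*K)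
        = ((1/mu + 1/nu)/(4*pp))*Lam*dl - ((1/mu - 1/nu)/(4*pp))/q*X + (((1/mu - 1/nu)/(4*pp))/2 - (lm/mu + lnu/nu)/(8*pp))*dl
           + K*Lam*((-(3/mu^2 + 1/nu^2)/(32*pp))*q*dl + ((1/mu^2 - 1/nu^2)/(16*pp))*X)
           + K*(((3/mu^2 + 1/nu^2)/(32*pp) - ((1/mu^2 - 1/nu^2)/(16*pp))/8 + (3*lm/mu^2 + lnu/nu^2)/(64*pp))*q*dl + (-3/4*((1/mu^2 - 1/nu^2)/(16*pp)) - (lm/mu^2 - lnu/nu^2)/(32*pp))*X)"
  using pos
  by (simp add: field_simps power2_eq_square)

lemma RGf_main:
  fixes K mu nu pp q X dl Lam lm lnu :: real
  assumes pos: "K > 0" "mu > 0" "nu > 0" "pp > 0" "q > 0"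
  shows "RGf K mu pp q X dl (K/mu) (K/nu) (Lam - lm/2) (Lam - lnu/2)
     (1 - K/mu*q/4) (K/mu*q/4) (1 - K/mu*q/4 + (K/mu*q)^2/64)
     (1 - K/nu*q/4 + (K/nu*q)^2/64)
     (-1/4 + K/mu*q/32) (-1/4 + K/nu*q/32)
     (1/4 - 3*(K/mu*q)/64) (1/4 - 3*(K/nu*q)/64)
     (1/32) (1/32) (-3/64) (-3/64)
   = ((1/mu + 1/nu)/(4*pp))*Lam*dl - ((1/mu - 1/nu)/(4*pp))/q*X + (((1/mu - 1/nu)/(4*pp))/2 - (lm/mu + lnu/nu)/(8*pp))*dl
           + K*Lam*((-(3/mu^2 + 1/nu^2)/(32*pp))*q*dl + ((1/mu^2 - 1/nu^2)/(16*pp))*X)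
           + K*(((3/mu^2 + 1/nu^2)/(32*pp) - ((1/mu^2 - 1/nu^2)/(16*pp))/8 + (3*lm/mu^2 + lnu/nu^2)/(64*pp))*q*dl + (-3/4*((1/mu^2 - 1/nu^2)/(16*pp)) - (lm/mu^2 - lnu/nu^2)/(32*pp))*X)"
proof -
  have e1: "2/pp*(-(1 - k2*q/4 + (k2*q)^2/64)/(2*q^2) + k2*(-1/4 + k2*q/32)/q + l*k2^2*(1/32) + k2^2*(-3/64))
   = (-1/(q^2) - k2/(4*q) - 3*k2^2/64 + l*k2^2/16)/pp" for k2 l
    using Y2poly[of q pp k2 l] pos by simp
  have e2: "2/pp*((1 - k2*q/4 + (k2*q)^2/64)/(2*q) + l*k2*(-1/4 + k2*q/32) + k2*(1/4 - 3*(k2*q)/64))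
   = (1/q + k2/4 - 5*k2^2*q/64 + l*(-k2/2 + k2^2*q/16))/pp" for k2 l
    using Y1poly[of q pp k2 l] pos by simp
  show ?thesis
    unfolding RGf_def e1 e2 using alg_Re_main[OF pos] by simp
qed

lemma RGf_err:
  fixes w rho mu nu pp q X dl lw C0 lm lnu :: real
  assumes pos: "w > 0" "rho > 0" "mu > 0" "nu > 0" "pp > 0" "q > 0"
  shows "RGf (w^2*rho) mu pp q X dl (w^2*rho/mu) (w^2*rho/nu) (lw + C0 - lm/2) (lw + C0 - lnu/2)
     eA eQ eP3s eP3p edPs edPp edQs edQp eddPs eddPp eddQs eddQp
   = dl/(2*pp*mu) * lw * eA + dl*(C0 - lm/2)/(2*pp*mu) * 1 * eA + dl/(2*pp*mu) * 1 * eQ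
     + X/(pp*rho*q^2) * (1/w^2) * eP3p + (- X/(pp*rho*q^2)) * (1/w^2) * eP3s
     + (- 2*X/(pp*q*nu)) * 1 * edPp + 2*X/(pp*q*mu) * 1 * edPs
     + (- 2*X*rho/(pp*nu^2)) * (w^2*lw) * eddPp + (- 2*X*rho*(C0 - lnu/2)/(pp*nu^2)) * w^2 * eddPp
     + 2*X*rho/(pp*mu^2) * (w^2*lw) * eddPs + 2*X*rho*(C0 - lm/2)/(pp*mu^2) * w^2 * eddPs
     + (- 2*X*rho/(pp*nu^2)) * w^2 * eddQp + 2*X*rho/(pp*mu^2) * w^2 * eddQs
     + (- dl/(2*pp*rho*q)) * (1/w^2) * eP3p + dl/(2*pp*rho*q) * (1/w^2) * eP3s
     + (- dl/(pp*nu)) * lw * edPp + (- dl*(C0 - lnu/2)/(pp*nu)) * 1 * edPp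
     + dl/(pp*mu) * lw * edPs + dl*(C0 - lm/2)/(pp*mu) * 1 * edPs
     + (- dl/(pp*nu)) * 1 * edQp + dl/(pp*mu) * 1 * edQs"
  using pos unfolding RGf_def
  by (simp add: field_simps power2_eq_square)

definition IGf :: "real \<Rightarrow> real \<Rightarrow> real \<Rightarrow> real \<Rightarrow> real \<Rightarrow> real \<Rightarrow> real \<Rightarrow> real \<Rightarrow> real \<Rightarrow> real \<Rightarrow> real \<Rightarrow> real" where
  "IGf K mu X dl ks2 kp2 PsA dPs dPp ddPs ddPp =
     - dl/(4*mu)*PsA + (4*X*(kp2^2*ddPp - ks2^2*ddPs) + 2*dl*(kp2*dPp - ks2*dPs))/(4*K)"

lemma IGf_add:
  "IGf K mu X dl ks2 kp2 (PsA+PsA') (dPs+dPs') (dPp+dPp') (ddPs+ddPs') (ddPp+ddPp')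
   = IGf K mu X dl ks2 kp2 PsA dPs dPp ddPs ddPp + IGf K mu X dl ks2 kp2 PsA' dPs' dPp' ddPs' ddPp'"
  unfolding IGf_def by (simp add: algebra_simps add_divide_distrib diff_divide_distrib)

lemma IGf_main:
  assumes pos: "K > 0" "mu > 0" "nu > 0" "q > 0"
  shows "IGf K mu X dl (K/mu) (K/nu) (1 - K/mu*q/4) (-1/4 + K/mu*q/32) (-1/4 + K/nu*q/32) (1/32) (1/32)
    = -(1/mu + 1/nu)/8*dl + K*((3/mu^2 + 1/nu^2)/64*q*dl - (1/mu^2 - 1/nu^2)/32*X)"
  using pos unfolding IGf_def by (simp add: field_simps power2_eq_square)

lemma IGf_err:
  assumes pos: "w > 0" "rho > 0" "mu > 0" "nu > 0"
  shows "IGf (w^2*rho) mu X dl (w^2*rho/mu) (w^2*rho/nu) eA edPs edPp eddPs eddPp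
    = (- dl/(4*mu)) * 1 * eA + X*rho/nu^2 * w^2 * eddPp + (- X*rho/mu^2) * w^2 * eddPs
      + dl/(2*nu) * 1 * edPp + (- dl/(2*mu)) * 1 * edPs"
  using pos unfolding IGf_def by (simp add: field_simps power2_eq_square)


lemma alg_Re_full:
  fixes w rho mu nu pp q X dl lw C0 lm lnu :: real
  assumes pos: "w > 0" "rho > 0" "mu > 0" "nu > 0" "pp > 0" "q > 0"
  and h: "PsA = (1 - w^2*rho/mu*q/4) + eA" "Qs = w^2*rho/mu*q/4 + eQ"
     "Ps = (1 - w^2*rho/mu*q/4 + (w^2*rho/mu*q)^2/64) + eP3s"
     "Pp = (1 - w^2*rho/nu*q/4 + (w^2*rho/nu*q)^2/64) + eP3p"
     "dPs = (-1/4 + w^2*rho/mu*q/32) + edPs" "dPp = (-1/4 + w^2*rho/nu*q/32) + edPp"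
     "dQs = (1/4 - 3*(w^2*rho/mu*q)/64) + edQs" "dQp = (1/4 - 3*(w^2*rho/nu*q)/64) + edQp"
     "ddPs = 1/32 + eddPs" "ddPp = 1/32 + eddPp" "ddQs = -3/64 + eddQs" "ddQp = -3/64 + eddQp"
  shows "RGf (w^2*rho) mu pp q X dl (w^2*rho/mu) (w^2*rho/nu) (lw + C0 - lm/2) (lw + C0 - lnu/2)
           PsA Qs Ps Pp dPs dPp dQs dQp ddPs ddPp ddQs ddQp
     - (((1/mu + 1/nu)/(4*pp))*(lw + C0)*dl - ((1/mu - 1/nu)/(4*pp))/q*X + (((1/mu - 1/nu)/(4*pp))/2 - (lm/mu + lnu/nu)/(8*pp))*dl
           + (w^2*rho)*(lw + C0)*((-(3/mu^2 + 1/nu^2)/(32*pp))*q*dl + ((1/mu^2 - 1/nu^2)/(16*pp))*X)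
           + (w^2*rho)*(((3/mu^2 + 1/nu^2)/(32*pp) - ((1/mu^2 - 1/nu^2)/(16*pp))/8 + (3*lm/mu^2 + lnu/nu^2)/(64*pp))*q*dl + (-3/4*((1/mu^2 - 1/nu^2)/(16*pp)) - (lm/mu^2 - lnu/nu^2)/(32*pp))*X))
   = dl/(2*pp*mu) * lw * eA + dl*(C0 - lm/2)/(2*pp*mu) * 1 * eA + dl/(2*pp*mu) * 1 * eQ
     + X/(pp*rho*q^2) * (1/w^2) * eP3p + (- X/(pp*rho*q^2)) * (1/w^2) * eP3s
     + (- 2*X/(pp*q*nu)) * 1 * edPp + 2*X/(pp*q*mu) * 1 * edPs
     + (- 2*X*rho/(pp*nu^2)) * (w^2*lw) * eddPp + (- 2*X*rho*(C0 - lnu/2)/(pp*nu^2)) * w^2 * eddPp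
     + 2*X*rho/(pp*mu^2) * (w^2*lw) * eddPs + 2*X*rho*(C0 - lm/2)/(pp*mu^2) * w^2 * eddPs
     + (- 2*X*rho/(pp*nu^2)) * w^2 * eddQp + 2*X*rho/(pp*mu^2) * w^2 * eddQs
     + (- dl/(2*pp*rho*q)) * (1/w^2) * eP3p + dl/(2*pp*rho*q) * (1/w^2) * eP3s
     + (- dl/(pp*nu)) * lw * edPp + (- dl*(C0 - lnu/2)/(pp*nu)) * 1 * edPp
     + dl/(pp*mu) * lw * edPs + dl*(C0 - lm/2)/(pp*mu) * 1 * edPs
     + (- dl/(pp*nu)) * 1 * edQp + dl/(pp*mu) * 1 * edQs"
proof -
  have K: "w^2*rho > 0" using pos by simp
  show ?thesis
    unfolding h RGf_add RGf_main[OF K pos(3-6), of X dl "lw + C0" lm lnu]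
    unfolding RGf_err[OF pos, of X dl lw C0 lm lnu] by simp
qed

lemma alg_Im_full:
  fixes w rho mu nu q X dl :: real
  assumes pos: "w > 0" "rho > 0" "mu > 0" "nu > 0" "q > 0"
  and h: "PsA = (1 - w^2*rho/mu*q/4) + eA"
     "dPs = (-1/4 + w^2*rho/mu*q/32) + edPs" "dPp = (-1/4 + w^2*rho/nu*q/32) + edPp"
     "ddPs = 1/32 + eddPs" "ddPp = 1/32 + eddPp"
  shows "IGf (w^2*rho) mu X dl (w^2*rho/mu) (w^2*rho/nu) PsA dPs dPp ddPs ddPp
     - (-(1/mu + 1/nu)/8*dl + (w^2*rho)*((3/mu^2 + 1/nu^2)/64*q*dl - (1/mu^2 - 1/nu^2)/32*X))
   = (- dl/(4*mu)) * 1 * eA + X*rho/nu^2 * w^2 * eddPp + (- X*rho/mu^2) * w^2 * eddPs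
      + dl/(2*nu) * 1 * edPp + (- dl/(2*mu)) * 1 * edPs"
proof -
  have K: "w^2*rho > 0" using pos by simp
  show ?thesis
    unfolding h IGf_add IGf_main[OF K pos(3-5), of X dl]
    unfolding IGf_err[OF pos(1-4), of X dl] by simp
qed

lemma tail_eqs:
  "PS cP u = (1 - u/4) + tail cP 2 u"
  "PS cQ u = u/4 + tail cQ 2 u"
  "PS cP u = (1 - u/4 + u^2/64) + tail cP 3 u"
  "PS (diffs cP) u = (-1/4 + u/32) + tail (diffs cP) 2 u"
  "PS (diffs cQ) u = (1/4 - 3*u/64) + tail (diffs cQ) 2 u"
  "PS (diffs (diffs cP)) u = 1/32 + tail (diffs (diffs cP)) 1 u"
  "PS (diffs (diffs cQ)) u = -3/64 + tail (diffs (diffs cQ)) 1 u"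
  by (simp_all add: tail_def cP_def cQ_def diffs_def eval_nat_numeral harm_def power2_eq_square field_simps)


lemma tail_bigo2:
  assumes "entire c" "m = 2*N"
  shows "(\<lambda>w. tail c N (w^2*a/b*d)) \<in> O[at_right 0](\<lambda>w. w^m)"
proof -
  have "(\<lambda>w. tail c N (w^2*a/b*d)) = (\<lambda>w. tail c N ((a/b*d) * w^2))"
    by (simp add: fun_eq_iff mult_ac)
  then show ?thesis using tail_bigo'[OF assms, of "a/b*d"] by simp
qed

lemma tb1: "entire c \<Longrightarrow> (\<lambda>w. C * 1 * tail c 2 (w^2*a/b*d)) \<in> O[at_right 0](gO)"
  by (rule term_bigo[OF tail_bigo2 asy1]) simp_all
lemma tbL: "entire c \<Longrightarrow> (\<lambda>w. C * ln w * tail c 2 (w^2*a/b*d)) \<in> O[at_right 0](gO)"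
  by (rule term_bigo[OF tail_bigo2 asyL]) simp_all
lemma tb2: "entire c \<Longrightarrow> (\<lambda>w. C * w^2 * tail c 1 (w^2*a/b*d)) \<in> O[at_right 0](gO)"
  by (rule term_bigo[OF tail_bigo2 asy2]) simp_all
lemma tb2L: "entire c \<Longrightarrow> (\<lambda>w. C * (w^2 * ln w) * tail c 1 (w^2*a/b*d)) \<in> O[at_right 0](gO)"
  by (rule term_bigo[OF tail_bigo2 asy2L]) simp_all
lemma tbm2: "entire c \<Longrightarrow> (\<lambda>w. C * (1/w^2) * tail c 3 (w^2*a/b*d)) \<in> O[at_right 0](gO)"
  by (rule term_bigo[OF tail_bigo2 asym2]) simp_all


lemma ks_facts:
  fixes mu rho w :: real
  assumes "mu > 0" "rho > 0" "w > 0"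
  shows "w / sqrt (mu/rho) > 0" "(w / sqrt (mu/rho))^2 = w^2*rho/mu"
    "(w / sqrt (mu/rho))^4 = (w^2*rho/mu)^2"
    "ln (w / sqrt (mu/rho)) = ln w + ln rho/2 - ln mu/2"
proof -
  show "w / sqrt (mu/rho) > 0" using assms by simp
  show sq: "(w / sqrt (mu/rho))^2 = w^2*rho/mu" using assms by (simp add: power_divide)
  show "(w / sqrt (mu/rho))^4 = (w^2*rho/mu)^2"
    using sq by (metis power_mult numeral_times_numeral semiring_norm(12) mult_2_right numeral_Bit0)
  show "ln (w / sqrt (mu/rho)) = ln w + ln rho/2 - ln mu/2"
    using assms by (simp add: ln_div ln_sqrt field_simps)
qed

lemma entry_Gamma:
  fixes lam mu rho w :: real and x :: "real^2" and i j :: 2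
  assumes mu: "mu > 0" and nu: "2*mu + lam > 0" and rho: "rho > 0" and x: "x \<noteq> 0" and w: "w > 0"
  defines "ks \<equiv> k_s lam mu rho w" and "kp \<equiv> k_p lam mu rho w"
  defines "dl \<equiv> (if i = j then 1 else 0 :: real)" and "q \<equiv> x \<bullet> x"
  shows "Gamma_omega lam mu rho w x $ i $ j =
     (-\<i>/(4*mu) * (of_real (Af ks q) + \<i> * of_real (Yf ks q))) * of_real dl
     + \<i>/(4*w^2*rho) * (of_real (4 * x$i * x$j) * (of_real (A2f kp q - A2f ks q) + \<i> * of_real (Y2f kp q - Y2f ks q))
        + of_real (2 * dl) * (of_real (A1f kp q - A1f ks q) + \<i> * of_real (Y1f kp q - Y1f ks q)))"
proof -
  have ks: "ks > 0" unfolding ks_def k_s_def using ks_facts(1)[OF mu rho w] .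
  have kp: "kp > 0" unfolding kp_def k_p_def using ks_facts(1)[of "lam + 2*mu" rho w] nu rho w by simp
  show ?thesis
    unfolding Gamma_omega_def cscale_def Imat_def
    using hess_g[OF kp[unfolded kp_def] ks[unfolded ks_def] x, of i j] hankel_rad[OF ks x]
    by (simp add: mat_def dl_def q_def ks_def kp_def)
qed


lemma entry_ReIm:
  fixes lam mu rho w :: real and x :: "real^2" and i j :: 2
  assumes mu: "mu > 0" and nu: "2*mu + lam > 0" and rho: "rho > 0" and x: "x \<noteq> 0" and w: "w > 0"
  defines "dl \<equiv> (if i = j then 1 else 0 :: real)" and "q \<equiv> x \<bullet> x" and "X \<equiv> x$i * x$j"
  defines "C0 \<equiv> ln rho/2 + ln (norm x) - ln 2 + euler_mascheroni" and "nu \<equiv> 2*mu + lam"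
  shows "Re (Gamma_omega lam mu rho w x $ i $ j) = RGf (w^2*rho) mu pi q X dl (w^2*rho/mu) (w^2*rho/nu)
      (ln w + C0 - ln mu/2) (ln w + C0 - ln nu/2)
      (PS cP (w^2*rho/mu*q)) (PS cQ (w^2*rho/mu*q)) (PS cP (w^2*rho/mu*q)) (PS cP (w^2*rho/nu*q))
      (PS (diffs cP) (w^2*rho/mu*q)) (PS (diffs cP) (w^2*rho/nu*q))
      (PS (diffs cQ) (w^2*rho/mu*q)) (PS (diffs cQ) (w^2*rho/nu*q))
      (PS (diffs (diffs cP)) (w^2*rho/mu*q)) (PS (diffs (diffs cP)) (w^2*rho/nu*q))
      (PS (diffs (diffs cQ)) (w^2*rho/mu*q)) (PS (diffs (diffs cQ)) (w^2*rho/nu*q))"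
   and "Im (Gamma_omega lam mu rho w x $ i $ j) = IGf (w^2*rho) mu X dl (w^2*rho/mu) (w^2*rho/nu)
      (PS cP (w^2*rho/mu*q)) (PS (diffs cP) (w^2*rho/mu*q)) (PS (diffs cP) (w^2*rho/nu*q))
      (PS (diffs (diffs cP)) (w^2*rho/mu*q)) (PS (diffs (diffs cP)) (w^2*rho/nu*q))"
proof -
  define ks where "ks = k_s lam mu rho w"
  define kp where "kp = k_p lam mu rho w"
  have nu': "lam + 2*mu = nu" unfolding nu_def by simp
  have nupos: "nu > 0" using nu unfolding nu_def .
  have ksf: "ks^2 = w^2*rho/mu" "ks^4 = (w^2*rho/mu)^2" "ln ks = ln w + ln rho/2 - ln mu/2"
    unfolding ks_def k_s_def using ks_facts[OF mu rho w] by auto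
  have kpf: "kp^2 = w^2*rho/nu" "kp^4 = (w^2*rho/nu)^2" "ln kp = ln w + ln rho/2 - ln nu/2"
    unfolding kp_def k_p_def nu' using ks_facts[OF nupos rho w] by auto
  have lq: "ln q / 2 = ln (norm x)"
    unfolding q_def using x by (simp add: power2_norm_eq_inner[symmetric] ln_realpow)
  have ells: "ellf ks q = ln w + C0 - ln mu/2" and ellp: "ellf kp q = ln w + C0 - ln nu/2"
    unfolding ellf_def ksf kpf lq C0_def by simp_all
  have E: "Gamma_omega lam mu rho w x $ i $ j =
     (-\<i>/(4*mu) * (of_real (Af ks q) + \<i> * of_real (Yf ks q))) * of_real dl
     + \<i>/(4*w^2*rho) * (of_real (4 * x$i * x$j) * (of_real (A2f kp q - A2f ks q) + \<i> * of_real (Y2f kp q - Y2f ks q))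
        + of_real (2 * dl) * (of_real (A1f kp q - A1f ks q) + \<i> * of_real (Y1f kp q - Y1f ks q)))"
    unfolding ks_def kp_def dl_def q_def by (rule entry_Gamma[OF mu nu rho x w])
  have "Re (Gamma_omega lam mu rho w x $ i $ j) =
     dl/(4*mu)*Yf ks q - (4*X*(Y2f kp q - Y2f ks q) + 2*dl*(Y1f kp q - Y1f ks q))/(4*(w^2*rho))"
    unfolding E X_def using mu rho w by (simp add: field_simps)
  then show "Re (Gamma_omega lam mu rho w x $ i $ j) = RGf (w^2*rho) mu pi q X dl (w^2*rho/mu) (w^2*rho/nu)
      (ln w + C0 - ln mu/2) (ln w + C0 - ln nu/2)
      (PS cP (w^2*rho/mu*q)) (PS cQ (w^2*rho/mu*q)) (PS cP (w^2*rho/mu*q)) (PS cP (w^2*rho/nu*q))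
      (PS (diffs cP) (w^2*rho/mu*q)) (PS (diffs cP) (w^2*rho/nu*q))
      (PS (diffs cQ) (w^2*rho/mu*q)) (PS (diffs cQ) (w^2*rho/nu*q))
      (PS (diffs (diffs cP)) (w^2*rho/mu*q)) (PS (diffs (diffs cP)) (w^2*rho/nu*q))
      (PS (diffs (diffs cQ)) (w^2*rho/mu*q)) (PS (diffs (diffs cQ)) (w^2*rho/nu*q))"
    unfolding Yf_def Y1f_def Y2f_def ksf kpf ells ellp RGf_def by simp
  have "Im (Gamma_omega lam mu rho w x $ i $ j) =
     - dl/(4*mu)*Af ks q + (4*X*(A2f kp q - A2f ks q) + 2*dl*(A1f kp q - A1f ks q))/(4*(w^2*rho))"
    unfolding E X_def using mu rho w by (simp add: field_simps)
  then show "Im (Gamma_omega lam mu rho w x $ i $ j) = IGf (w^2*rho) mu X dl (w^2*rho/mu) (w^2*rho/nu)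
      (PS cP (w^2*rho/mu*q)) (PS (diffs cP) (w^2*rho/mu*q)) (PS (diffs cP) (w^2*rho/nu*q))
      (PS (diffs (diffs cP)) (w^2*rho/mu*q)) (PS (diffs (diffs cP)) (w^2*rho/nu*q))"
    unfolding Af_def A1f_def A2f_def ksf kpf IGf_def by simp
qed


lemma Re_em: "Re (euler_mascheroni :: complex) = euler_mascheroni"
  by (metis Re_complex_of_real of_real_euler_mascheroni)
lemma Im_em: "Im (euler_mascheroni :: complex) = 0"
  by (metis Im_complex_of_real of_real_euler_mascheroni)

lemma Ln2c: "Re (ln (2::complex)) = ln 2" "Im (ln (2::complex)) = 0"
  using Ln_of_real[of 2] by (metis Re_complex_of_real zero_less_numeral of_real_numeral,
      metis Im_complex_of_real zero_less_numeral of_real_numeral)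

lemma exp_ReIm:
  fixes lam mu rho w :: real and x :: "real^2" and i j :: 2
  assumes mu: "mu > 0" and nu: "2*mu + lam > 0" and rho: "rho > 0" and x: "x \<noteq> 0" and w: "w > 0"
  defines "dl \<equiv> (if i = j then 1 else 0 :: real)" and "q \<equiv> x \<bullet> x" and "X \<equiv> x$i * x$j"
  defines "C0 \<equiv> ln rho/2 + ln (norm x) - ln 2 + euler_mascheroni" and "nu \<equiv> 2*mu + lam"
  defines "A1 \<equiv> alpha1 lam mu" and "A2 \<equiv> alpha2 lam mu" and "B2 \<equiv> beta2 lam mu" and "B3 \<equiv> beta3 lam mu"
  defines "Exl \<equiv> Gamma0 lam mu x
               + cscale (gamma_omega lam mu rho w) Imat
               + cscale (w^2 * ln w * rho) (Gamma1 lam mu x)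
               + cscale (w^2 * rho * ln (sqrt rho)) (Gamma1 lam mu x)
               + cscale (w^2 * rho) (Gamma2 lam mu x)"
  shows "Re (Exl $ i $ j) = A1*(ln w + C0)*dl - A2/q*X + (A2/2 - (ln mu/mu + ln nu/nu)/(8*pi))*dl
           + (w^2*rho)*(ln w + C0)*(B2*q*dl + B3*X)
           + (w^2*rho)*((-B2 - B3/8 + (3*ln mu/mu^2 + ln nu/nu^2)/(64*pi))*q*dl + (-3/4*B3 - (ln mu/mu^2 - ln nu/nu^2)/(32*pi))*X)"
   and "Im (Exl $ i $ j) = -(pi/2)*A1*dl + (w^2*rho)*(-(pi/2)*B2*q*dl - (pi/2)*B3*X)"
proof -
  have nupos: "nu > 0" using nu unfolding nu_def .
  have l1: "ln (sqrt rho * w) = ln rho/2 + ln w" using rho w by (simp add: ln_mult ln_sqrt)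
  have l2: "ln (sqrt rho) = ln rho/2" using rho by (simp add: ln_sqrt)
  have nq: "(norm x)^2 = q" unfolding q_def by (simp add: power2_norm_eq_inner)
  have qpos: "q > 0" unfolding q_def using x by simp
  have ac: "alpha_c lam mu = A1/2*Ec + A2/2 - 1/(8*pi)*(1/mu*ln mu + 1/nu*ln nu)"
    unfolding alpha_c_def A1_def A2_def nu_def by simp
  have b1: "beta1 lam mu = (1/2*Ec - 1)*B2 - 1/8*B3 + 1/(2^6*pi)*(3/mu^2*ln mu + 1/nu^2*ln nu)"
    unfolding beta1_def B2_def B3_def nu_def by simp
  have b4: "beta4 lam mu = 1/4*(2*Ec - 3)*B3 - 1/(2^5*pi)*(1/mu^2*ln mu - 1/nu^2*ln nu)"
    unfolding beta4_def B3_def nu_def by simp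
  note defs = Gamma0_def Gamma1_def Gamma2_def cscale_def Imat_def mat_def outer_def gamma_omega_def
       ac Ec_def b1 b4 l1 l2 nq Re_em Im_em Ln2c
  note defs2 = dl_def X_def C0_def A1_def[symmetric] A2_def[symmetric] B2_def[symmetric] B3_def[symmetric]
  show "Re (Exl $ i $ j) = A1*(ln w + C0)*dl - A2/q*X + (A2/2 - (ln mu/mu + ln nu/nu)/(8*pi))*dl
           + (w^2*rho)*(ln w + C0)*(B2*q*dl + B3*X)
           + (w^2*rho)*((-B2 - B3/8 + (3*ln mu/mu^2 + ln nu/nu^2)/(64*pi))*q*dl + (-3/4*B3 - (ln mu/mu^2 - ln nu/nu^2)/(32*pi))*X)"
    unfolding Exl_def using mu nupos qpos
    by (cases "i = j") (simp_all add: defs defs2, simp_all add: algebra_simps diff_divide_distrib add_divide_distrib)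
  show "Im (Exl $ i $ j) = -(pi/2)*A1*dl + (w^2*rho)*(-(pi/2)*B2*q*dl - (pi/2)*B3*X)"
    unfolding Exl_def using mu nupos qpos
    by (cases "i = j") (simp_all add: defs defs2 field_simps)
qed

lemma neg_helper: "-((- a - b)/c) = (a + b)/(c::real)"
  by (simp add: diff_divide_distrib add_divide_distrib)

lemma norm_mat_le:
  fixes M :: "complex^2^2"
  shows "norm M \<le> (\<Sum>i\<in>UNIV. \<Sum>j\<in>UNIV. \<bar>Re (M$i$j)\<bar> + \<bar>Im (M$i$j)\<bar>)"
proof -
  have "norm M \<le> (\<Sum>i\<in>UNIV. norm (M$i))"
    unfolding norm_vec_def by (rule L2_set_le_sum) simp
  also have "\<dots> \<le> (\<Sum>i\<in>UNIV. \<Sum>j\<in>UNIV. norm (M$i$j))"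
  proof (rule sum_mono)
    fix i show "norm (M$i) \<le> (\<Sum>j\<in>UNIV. norm (M$i$j))"
      unfolding norm_vec_def by (rule L2_set_le_sum) simp
  qed
  also have "\<dots> \<le> (\<Sum>i\<in>UNIV. \<Sum>j\<in>UNIV. \<bar>Re (M$i$j)\<bar> + \<bar>Im (M$i$j)\<bar>)"
    by (intro sum_mono cmod_le)
  finally show ?thesis .
qed

theorem proposition2p2:
  fixes lam mu rho :: real and x :: "real^2"
  assumes "mu > 0" and "2*mu + lam > 0" and "rho > 0" and "x \<noteq> 0"
  shows "(\<lambda>\<omega>. norm (Gamma_omega lam mu rho \<omega> x
            - (Gamma0 lam mu x
               + cscale (gamma_omega lam mu rho \<omega>) Imat
               + cscale (\<omega>^2 * ln \<omega> * rho) (Gamma1 lam mu x)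
               + cscale (\<omega>^2 * rho * ln (sqrt rho)) (Gamma1 lam mu x)
               + cscale (\<omega>^2 * rho) (Gamma2 lam mu x))))
         \<in> O[at_right 0](\<lambda>\<omega>. \<omega>^4 * ln \<omega> + \<omega>^4)"
proof -
  note mu = assms(1) and nu = assms(2) and rho = assms(3) and x = assms(4)
  define nu where "nu = 2*mu + lam"
  have nupos: "nu > 0" using nu unfolding nu_def .
  define q where "q = x \<bullet> x"
  have qpos: "q > 0" unfolding q_def using x by simp
  define C0 where "C0 = ln rho/2 + ln (norm x) - ln 2 + euler_mascheroni"
  define E where "E = (\<lambda>\<omega>. Gamma_omega lam mu rho \<omega> x
            - (Gamma0 lam mu x
               + cscale (gamma_omega lam mu rho \<omega>) Imat
               + cscale (\<omega>^2 * ln \<omega> * rho) (Gamma1 lam mu x)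
               + cscale (\<omega>^2 * rho * ln (sqrt rho)) (Gamma1 lam mu x)
               + cscale (\<omega>^2 * rho) (Gamma2 lam mu x)))"
  have A1: "alpha1 lam mu = (1/mu + 1/nu)/(4*pi)" unfolding alpha1_def nu_def by simp
  have A2: "alpha2 lam mu = (1/mu - 1/nu)/(4*pi)" unfolding alpha2_def nu_def by simp
  have B2: "beta2 lam mu = -(3/mu^2 + 1/nu^2)/(32*pi)" unfolding beta2_def nu_def by (simp add: field_simps)
  have B3: "beta3 lam mu = (1/mu^2 - 1/nu^2)/(16*pi)" unfolding beta3_def nu_def by simp
  have ev: "eventually (\<lambda>\<omega>. \<omega> > 0) (at_right (0::real))" by (rule eventually_at_right_less)
  have entry: "(\<lambda>\<omega>. \<bar>Re (E \<omega> $ i $ j)\<bar> + \<bar>Im (E \<omega> $ i $ j)\<bar>) \<in> O[at_right 0](gO)" for i j :: 2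
  proof -
    define dl where "dl = (if i = j then 1 else 0 :: real)"
    define X where "X = x$i * x$j"
    let ?u = "\<lambda>w k. w^2*rho/k*q"
    define ReErr where "ReErr = (\<lambda>w. let lw = ln w; pp = pi; lm = ln mu; lnu = ln nu;
       eA = tail cP 2 (w^2*rho/mu*q); eQ = tail cQ 2 (w^2*rho/mu*q);
       eP3s = tail cP 3 (w^2*rho/mu*q); eP3p = tail cP 3 (w^2*rho/nu*q);
       edPs = tail (diffs cP) 2 (w^2*rho/mu*q); edPp = tail (diffs cP) 2 (w^2*rho/nu*q);
       edQs = tail (diffs cQ) 2 (w^2*rho/mu*q); edQp = tail (diffs cQ) 2 (w^2*rho/nu*q);
       eddPs = tail (diffs (diffs cP)) 1 (w^2*rho/mu*q); eddPp = tail (diffs (diffs cP)) 1 (w^2*rho/nu*q);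
       eddQs = tail (diffs (diffs cQ)) 1 (w^2*rho/mu*q); eddQp = tail (diffs (diffs cQ)) 1 (w^2*rho/nu*q) in
       dl/(2*pp*mu) * lw * eA + dl*(C0 - lm/2)/(2*pp*mu) * 1 * eA + dl/(2*pp*mu) * 1 * eQ
     + X/(pp*rho*q^2) * (1/w^2) * eP3p + (- X/(pp*rho*q^2)) * (1/w^2) * eP3s
     + (- 2*X/(pp*q*nu)) * 1 * edPp + 2*X/(pp*q*mu) * 1 * edPs
     + (- 2*X*rho/(pp*nu^2)) * (w^2*lw) * eddPp + (- 2*X*rho*(C0 - lnu/2)/(pp*nu^2)) * w^2 * eddPp
     + 2*X*rho/(pp*mu^2) * (w^2*lw) * eddPs + 2*X*rho*(C0 - lm/2)/(pp*mu^2) * w^2 * eddPs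
     + (- 2*X*rho/(pp*nu^2)) * w^2 * eddQp + 2*X*rho/(pp*mu^2) * w^2 * eddQs
     + (- dl/(2*pp*rho*q)) * (1/w^2) * eP3p + dl/(2*pp*rho*q) * (1/w^2) * eP3s
     + (- dl/(pp*nu)) * lw * edPp + (- dl*(C0 - lnu/2)/(pp*nu)) * 1 * edPp
     + dl/(pp*mu) * lw * edPs + dl*(C0 - lm/2)/(pp*mu) * 1 * edPs
     + (- dl/(pp*nu)) * 1 * edQp + dl/(pp*mu) * 1 * edQs)"
    define ImErr where "ImErr = (\<lambda>w. (- dl/(4*mu)) * 1 * tail cP 2 (w^2*rho/mu*q)
      + X*rho/nu^2 * w^2 * tail (diffs (diffs cP)) 1 (w^2*rho/nu*q)
      + (- X*rho/mu^2) * w^2 * tail (diffs (diffs cP)) 1 (w^2*rho/mu*q)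
      + dl/(2*nu) * 1 * tail (diffs cP) 2 (w^2*rho/nu*q)
      + (- dl/(2*mu)) * 1 * tail (diffs cP) 2 (w^2*rho/mu*q))"
    have ReO: "ReErr \<in> O[at_right 0](gO)"
      unfolding ReErr_def Let_def
      by (intro sum_in_bigo(1) tb1 tbL tb2 tb2L tbm2 entires)
    have ImO: "ImErr \<in> O[at_right 0](gO)"
      unfolding ImErr_def
      by (intro sum_in_bigo(1) tb1 tbL tb2 tb2L tbm2 entires)
    have ReEq: "Re (E w $ i $ j) = ReErr w" if w: "w > 0" for w
    proof -
      have "Re (E w $ i $ j) = Re (Gamma_omega lam mu rho w x $ i $ j) - Re ((Gamma0 lam mu x
               + cscale (gamma_omega lam mu rho w) Imat
               + cscale (w^2 * ln w * rho) (Gamma1 lam mu x)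
               + cscale (w^2 * rho * ln (sqrt rho)) (Gamma1 lam mu x)
               + cscale (w^2 * rho) (Gamma2 lam mu x)) $ i $ j)"
        unfolding E_def by simp
      also have "\<dots> = ReErr w"
      proof -
        have r1: "Re (Gamma_omega lam mu rho w x $ i $ j) = RGf (w^2*rho) mu pi q X dl (w^2*rho/mu) (w^2*rho/nu)
          (ln w + C0 - ln mu/2) (ln w + C0 - ln nu/2)
          (PS cP (w^2*rho/mu*q)) (PS cQ (w^2*rho/mu*q)) (PS cP (w^2*rho/mu*q)) (PS cP (w^2*rho/nu*q))
          (PS (diffs cP) (w^2*rho/mu*q)) (PS (diffs cP) (w^2*rho/nu*q))
          (PS (diffs cQ) (w^2*rho/mu*q)) (PS (diffs cQ) (w^2*rho/nu*q))
          (PS (diffs (diffs cP)) (w^2*rho/mu*q)) (PS (diffs (diffs cP)) (w^2*rho/nu*q))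
          (PS (diffs (diffs cQ)) (w^2*rho/mu*q)) (PS (diffs (diffs cQ)) (w^2*rho/nu*q))"
          using entry_ReIm(1)[OF mu nu rho x w, of i j] unfolding dl_def q_def X_def C0_def nu_def .
        have r2: "Re ((Gamma0 lam mu x
               + cscale (gamma_omega lam mu rho w) Imat
               + cscale (w^2 * ln w * rho) (Gamma1 lam mu x)
               + cscale (w^2 * rho * ln (sqrt rho)) (Gamma1 lam mu x)
               + cscale (w^2 * rho) (Gamma2 lam mu x)) $ i $ j)
          = ((1/mu + 1/nu)/(4*pi))*(ln w + C0)*dl - ((1/mu - 1/nu)/(4*pi))/q*X + (((1/mu - 1/nu)/(4*pi))/2 - (ln mu/mu + ln nu/nu)/(8*pi))*dl
           + (w^2*rho)*(ln w + C0)*((-(3/mu^2 + 1/nu^2)/(32*pi))*q*dl + ((1/mu^2 - 1/nu^2)/(16*pi))*X)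
           + (w^2*rho)*(((3/mu^2 + 1/nu^2)/(32*pi) - ((1/mu^2 - 1/nu^2)/(16*pi))/8 + (3*ln mu/mu^2 + ln nu/nu^2)/(64*pi))*q*dl + (-3/4*((1/mu^2 - 1/nu^2)/(16*pi)) - (ln mu/mu^2 - ln nu/nu^2)/(32*pi))*X)"
          using exp_ReIm(1)[OF mu nu rho x w, of i j] unfolding dl_def[symmetric] q_def[symmetric] X_def[symmetric] C0_def[symmetric] nu_def[symmetric]
          unfolding A1 A2 B2 B3 by (simp add: neg_helper)
        have r3: "RGf (w^2*rho) mu pi q X dl (w^2*rho/mu) (w^2*rho/nu)
          (ln w + C0 - ln mu/2) (ln w + C0 - ln nu/2)
          (PS cP (w^2*rho/mu*q)) (PS cQ (w^2*rho/mu*q)) (PS cP (w^2*rho/mu*q)) (PS cP (w^2*rho/nu*q))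
          (PS (diffs cP) (w^2*rho/mu*q)) (PS (diffs cP) (w^2*rho/nu*q))
          (PS (diffs cQ) (w^2*rho/mu*q)) (PS (diffs cQ) (w^2*rho/nu*q))
          (PS (diffs (diffs cP)) (w^2*rho/mu*q)) (PS (diffs (diffs cP)) (w^2*rho/nu*q))
          (PS (diffs (diffs cQ)) (w^2*rho/mu*q)) (PS (diffs (diffs cQ)) (w^2*rho/nu*q))
          - (((1/mu + 1/nu)/(4*pi))*(ln w + C0)*dl - ((1/mu - 1/nu)/(4*pi))/q*X + (((1/mu - 1/nu)/(4*pi))/2 - (ln mu/mu + ln nu/nu)/(8*pi))*dl
           + (w^2*rho)*(ln w + C0)*((-(3/mu^2 + 1/nu^2)/(32*pi))*q*dl + ((1/mu^2 - 1/nu^2)/(16*pi))*X)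
           + (w^2*rho)*(((3/mu^2 + 1/nu^2)/(32*pi) - ((1/mu^2 - 1/nu^2)/(16*pi))/8 + (3*ln mu/mu^2 + ln nu/nu^2)/(64*pi))*q*dl + (-3/4*((1/mu^2 - 1/nu^2)/(16*pi)) - (ln mu/mu^2 - ln nu/nu^2)/(32*pi))*X))
          = ReErr w"
          unfolding ReErr_def Let_def
          by (rule alg_Re_full[OF w rho mu nupos pi_gt_zero qpos tail_eqs(1) tail_eqs(2) tail_eqs(3) tail_eqs(3)
              tail_eqs(4) tail_eqs(4) tail_eqs(5) tail_eqs(5) tail_eqs(6) tail_eqs(6) tail_eqs(7) tail_eqs(7)])
        show ?thesis unfolding r1 r2 r3 ..
      qed
      finally show ?thesis .
    qed
    have ImEq: "Im (E w $ i $ j) = ImErr w" if w: "w > 0" for w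
    proof -
      have "Im (E w $ i $ j) = Im (Gamma_omega lam mu rho w x $ i $ j) - Im ((Gamma0 lam mu x
               + cscale (gamma_omega lam mu rho w) Imat
               + cscale (w^2 * ln w * rho) (Gamma1 lam mu x)
               + cscale (w^2 * rho * ln (sqrt rho)) (Gamma1 lam mu x)
               + cscale (w^2 * rho) (Gamma2 lam mu x)) $ i $ j)"
        unfolding E_def by simp
      also have "\<dots> = ImErr w"
      proof -
        have r1: "Im (Gamma_omega lam mu rho w x $ i $ j) = IGf (w^2*rho) mu X dl (w^2*rho/mu) (w^2*rho/nu)
          (PS cP (w^2*rho/mu*q)) (PS (diffs cP) (w^2*rho/mu*q)) (PS (diffs cP) (w^2*rho/nu*q))
          (PS (diffs (diffs cP)) (w^2*rho/mu*q)) (PS (diffs (diffs cP)) (w^2*rho/nu*q))"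
          using entry_ReIm(2)[OF mu nu rho x w, of i j] unfolding dl_def q_def X_def C0_def nu_def .
        have r2: "Im ((Gamma0 lam mu x
               + cscale (gamma_omega lam mu rho w) Imat
               + cscale (w^2 * ln w * rho) (Gamma1 lam mu x)
               + cscale (w^2 * rho * ln (sqrt rho)) (Gamma1 lam mu x)
               + cscale (w^2 * rho) (Gamma2 lam mu x)) $ i $ j)
          = -(1/mu + 1/nu)/8*dl + (w^2*rho)*((3/mu^2 + 1/nu^2)/64*q*dl - (1/mu^2 - 1/nu^2)/32*X)"
        proof -
          have r2a: "Im ((Gamma0 lam mu x
               + cscale (gamma_omega lam mu rho w) Imat
               + cscale (w^2 * ln w * rho) (Gamma1 lam mu x)
               + cscale (w^2 * rho * ln (sqrt rho)) (Gamma1 lam mu x)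
               + cscale (w^2 * rho) (Gamma2 lam mu x)) $ i $ j)
            = -(pi/2)*alpha1 lam mu*dl + (w^2*rho)*(-(pi/2)*beta2 lam mu*q*dl - (pi/2)*beta3 lam mu*X)"
            using exp_ReIm(2)[OF mu nu rho x w, of i j] unfolding dl_def q_def X_def C0_def nu_def .
          have r2b: "-(pi/2)*alpha1 lam mu*dl + (w^2*rho)*(-(pi/2)*beta2 lam mu*q*dl - (pi/2)*beta3 lam mu*X)
            = -(1/mu + 1/nu)/8*dl + (w^2*rho)*((3/mu^2 + 1/nu^2)/64*q*dl - (1/mu^2 - 1/nu^2)/32*X)"
            unfolding A1 B2 B3 using mu nupos pi_gt_zero by (simp add: field_simps)
          show ?thesis using r2a r2b by simp
        qed
        have r3: "IGf (w^2*rho) mu X dl (w^2*rho/mu) (w^2*rho/nu)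
          (PS cP (w^2*rho/mu*q)) (PS (diffs cP) (w^2*rho/mu*q)) (PS (diffs cP) (w^2*rho/nu*q))
          (PS (diffs (diffs cP)) (w^2*rho/mu*q)) (PS (diffs (diffs cP)) (w^2*rho/nu*q))
          - (-(1/mu + 1/nu)/8*dl + (w^2*rho)*((3/mu^2 + 1/nu^2)/64*q*dl - (1/mu^2 - 1/nu^2)/32*X))
          = ImErr w"
          unfolding ImErr_def
          by (rule alg_Im_full[OF w rho mu nupos qpos tail_eqs(1) tail_eqs(4) tail_eqs(4) tail_eqs(6) tail_eqs(6)])
        show ?thesis unfolding r1 r2 r3 ..
      qed
      finally show ?thesis .
    qed
    have evR: "eventually (\<lambda>w. ReErr w = Re (E w $ i $ j)) (at_right 0)"
      using ev by eventually_elim (simp add: ReEq)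
    have ReBig: "(\<lambda>w. Re (E w $ i $ j)) \<in> O[at_right 0](gO)"
      using landau_o.big.in_cong[OF evR] ReO by blast
    have evI: "eventually (\<lambda>w. ImErr w = Im (E w $ i $ j)) (at_right 0)"
      using ev by eventually_elim (simp add: ImEq)
    have ImBig: "(\<lambda>w. Im (E w $ i $ j)) \<in> O[at_right 0](gO)"
      using landau_o.big.in_cong[OF evI] ImO by blast
    show ?thesis using ReBig ImBig
      by (intro sum_in_bigo(1)) simp_all
  qed
  define S where "S = (\<lambda>w. \<Sum>i\<in>UNIV. \<Sum>j\<in>UNIV. \<bar>Re (E w $ i $ j)\<bar> + \<bar>Im (E w $ i $ j)\<bar>)"
  have SO: "S \<in> O[at_right 0](gO)"
    unfolding S_def by (intro big_sum_in_bigo entry)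
  have "(\<lambda>w. norm (E w)) \<in> O[at_right 0](S)"
  proof (rule bigoI[where c = 1])
    show "\<forall>\<^sub>F w in at_right 0. norm (norm (E w)) \<le> 1 * norm (S w)"
    proof (rule always_eventually, rule allI)
      fix w
      have "S w \<ge> 0" unfolding S_def by (intro sum_nonneg) simp
      then show "norm (norm (E w)) \<le> 1 * norm (S w)"
        using norm_mat_le[of "E w"] unfolding S_def by simp
    qed
  qed
  then have "(\<lambda>w. norm (E w)) \<in> O[at_right 0](gO)"
    using SO by (rule landau_o.big_trans)
  moreover have "gO = (\<lambda>\<omega>. \<omega>^4 * ln \<omega> + \<omega>^4)" by (simp add: gO_def fun_eq_iff)
  ultimately show ?thesis unfolding E_def by simp
qed

end
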